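(* Let $\widetilde{\Sigma}_1,\ldots,\widetilde{\Sigma}_n$ be pairwise disjoint visibly pushdown alphabets with semantics $\mathcal{F}_k$, and let $\mathcal{M}$ and $\mathcal{S}$ be the $n$-stack and single-stack semantics defined in the context. For every well-nested word $\rho$ over $\widetilde{\Sigma}=\widetilde{\Sigma}_1\uplus\cdots\uplus\widetilde{\Sigma}_n$ without pending returns, every tuple of stacks $\vec{S}\in\prod_{j=1}^n\mathrm{stack}(V_j)$ and every stack $S\in\mathrm{stack}(V)$: if $\mathrm{top}(\vec{S})=\mathrm{top}(S)$, then $\{\mathrm{top}(\vec{T}):(\vec{S},\vec{T})\in\mathcal{M}(\rho)\}=\{\mathrm{top}(T):(S,T)\in\mathcal{S}(\rho)\}$.
   Context: A visibly pushdown (VP) alphabet is a finite alphabet partitioned into calls, returns and internals; $\Sigma^{\mathsf{call}}_k,\Sigma^{\mathsf{ret}}_k,\Sigma^{\mathsf{int}}_k$ are those of $\widetilde{\Sigma}_k$. Calls and returns are matched like parentheses (internals ignored); unmatched returns are pending returns. A word over $\widetilde{\Sigma}$ is well-nested if every matched call–return pair consists of letters from the same $\widetilde{\Sigma}_k$. Program $k$ has its own variables (disjoint across programs), $V_k$ its set of valuations, $V$ the set of valuations of all variables, identified with tuples $\nu=(\nu|_1,\ldots,\nu|_n)$, $\nu|_j\in V_j$. $\mathrm{stack}(X)$ is the set of nonempty finite stacks of frames in $X$; $S.\nu$ denotes a stack with top frame $\nu$ and rest $S$; $\mathrm{top}(S.\nu)=\nu$ and $\mathrm{top}(S_1,\ldots,S_n)=(\mathrm{top}(S_1),\ldots,\mathrm{top}(S_n))\in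 V$. Semantics $\mathcal{F}_k$: for $c\in\Sigma^{\mathsf{call}}_k$, $\mathcal{F}_k(c):V_k\to2^{V_k}$; for $r\in\Sigma^{\mathsf{ret}}_k$, $\mathcal{F}_k(r):V_k\times V_k\to2^{V_k}$; for $a\in\Sigma^{\mathsf{int}}_k$, $\mathcal{F}_k(a):V_k\to2^{V_k}$. $\mathcal{M}$: for $x\in\widetilde{\Sigma}_k$, $\mathcal{M}(x)$ relates tuples of stacks leaving components $j\ne k$ unchanged and changing the $k$-th: call $S.\nu\mapsto S.\nu.\nu'$ with $\nu'\in\mathcal{F}_k(x)(\nu)$; return $S.\nu_<.\nu\mapsto S.\nu'$ with $\nu'\in\mathcal{F}_k(x)(\nu,\nu_<)$; internal $S.\nu\mapsto S.\nu'$ with $\nu'\in\mathcal{F}_k(x)(\nu)$. $\mathcal{S}$ on stacks over $V$, for $x\in\widetilde{\Sigma}_k$: call $S.\nu\mapsto S.\nu.\nu'$ with $\nu'|_k\in\mathcal{F}_k(x)(\nu|_k)$, $\nu'|_j=\nu|_j$ for $j\ne k$; return $S.\nu_<.\nu\mapsto S.\nu'$ with $\nu'|_k\in\mathcal{F}_k(x)(\nu|_k,\nu_<|_k)$, $\nu'|_j=\nu|_j$ for $j\ne k$; internal $S.\nu\mapsto S.\nu'$ with $\nu'|_k\in\mathcal{F}_k(x)(\nu|_k)$, $\nu'|_j=\nu|_j$ for $j\ne k$. Both are extended to words by relational composition. *)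

theory Defs
  imports Main
begin

datatype kind = KCall | KRet | KInt

text \<open>The disjoint union of the VP alphabets of programs is modelled by a letter type 'a
  together with prog :: 'a => 'i (the index k with x in Sigma_k) and kd :: 'a => kind
  (call / return / internal). Stacks are nonempty lists, top frame = last element.\<close>

fun wn_aux :: "('a \<Rightarrow> 'i) \<Rightarrow> ('a \<Rightarrow> kind) \<Rightarrow> 'i list \<Rightarrow> 'a list \<Rightarrow> bool" where
  "wn_aux prog kd st [] = True"
| "wn_aux prog kd st (x # w) =
     (case kd x of
        KCall \<Rightarrow> wn_aux prog kd (prog x # st) w
      | KInt \<Rightarrow> wn_aux prog kd st w
      | KRet \<Rightarrow> (case st of [] \<Rightarrow> False
                 | k # st' \<Rightarrow> k = prog x \<and> wn_aux prog kd st' w))"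

definition well_nested_npr :: "('a \<Rightarrow> 'i) \<Rightarrow> ('a \<Rightarrow> kind) \<Rightarrow> 'a list \<Rightarrow> bool" where
  "well_nested_npr prog kd w = wn_aux prog kd [] w"

definition M1 :: "('a \<Rightarrow> 'i) \<Rightarrow> ('a \<Rightarrow> kind) \<Rightarrow> ('a \<Rightarrow> 'v \<Rightarrow> 'v set) \<Rightarrow>
    ('a \<Rightarrow> 'v \<Rightarrow> 'v \<Rightarrow> 'v set) \<Rightarrow> ('a \<Rightarrow> 'v \<Rightarrow> 'v set) \<Rightarrow> 'a \<Rightarrow>
    (('i \<Rightarrow> 'v list) \<times> ('i \<Rightarrow> 'v list)) set" where
  "M1 prog kd Fc Fr Fi x = {(Ss, Ts). (\<forall>j. j \<noteq> prog x \<longrightarrow> Ts j = Ss j) \<and>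
     (case kd x of
        KCall \<Rightarrow> (\<exists>S \<nu> \<nu>'. Ss (prog x) = S @ [\<nu>] \<and> Ts (prog x) = S @ [\<nu>, \<nu>'] \<and> \<nu>' \<in> Fc x \<nu>)
      | KRet \<Rightarrow> (\<exists>S \<nu>l \<nu> \<nu>'. Ss (prog x) = S @ [\<nu>l, \<nu>] \<and> Ts (prog x) = S @ [\<nu>'] \<and> \<nu>' \<in> Fr x \<nu> \<nu>l)
      | KInt \<Rightarrow> (\<exists>S \<nu> \<nu>'. Ss (prog x) = S @ [\<nu>] \<and> Ts (prog x) = S @ [\<nu>'] \<and> \<nu>' \<in> Fi x \<nu>))}"

fun Mw :: "('a \<Rightarrow> 'i) \<Rightarrow> ('a \<Rightarrow> kind) \<Rightarrow> ('a \<Rightarrow> 'v \<Rightarrow> 'v set) \<Rightarrow>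
    ('a \<Rightarrow> 'v \<Rightarrow> 'v \<Rightarrow> 'v set) \<Rightarrow> ('a \<Rightarrow> 'v \<Rightarrow> 'v set) \<Rightarrow> 'a list \<Rightarrow>
    (('i \<Rightarrow> 'v list) \<times> ('i \<Rightarrow> 'v list)) set" where
  "Mw prog kd Fc Fr Fi [] = Id"
| "Mw prog kd Fc Fr Fi (x # w) = M1 prog kd Fc Fr Fi x O Mw prog kd Fc Fr Fi w"

definition S1 :: "('a \<Rightarrow> 'i) \<Rightarrow> ('a \<Rightarrow> kind) \<Rightarrow> ('a \<Rightarrow> 'v \<Rightarrow> 'v set) \<Rightarrow>
    ('a \<Rightarrow> 'v \<Rightarrow> 'v \<Rightarrow> 'v set) \<Rightarrow> ('a \<Rightarrow> 'v \<Rightarrow> 'v set) \<Rightarrow> 'a \<Rightarrow>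
    (('i \<Rightarrow> 'v) list \<times> ('i \<Rightarrow> 'v) list) set" where
  "S1 prog kd Fc Fr Fi x = {(Sa, Ta).
     (case kd x of
        KCall \<Rightarrow> (\<exists>S \<nu> \<nu>'. Sa = S @ [\<nu>] \<and> Ta = S @ [\<nu>, \<nu>'] \<and> \<nu>' (prog x) \<in> Fc x (\<nu> (prog x))
                  \<and> (\<forall>j. j \<noteq> prog x \<longrightarrow> \<nu>' j = \<nu> j))
      | KRet \<Rightarrow> (\<exists>S \<nu>l \<nu> \<nu>'. Sa = S @ [\<nu>l, \<nu>] \<and> Ta = S @ [\<nu>'] \<and> \<nu>' (prog x) \<in> Fr x (\<nu> (prog x)) (\<nu>l (prog x))
                  \<and> (\<forall>j. j \<noteq> prog x \<longrightarrow> \<nu>' j = \<nu> j))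
      | KInt \<Rightarrow> (\<exists>S \<nu> \<nu>'. Sa = S @ [\<nu>] \<and> Ta = S @ [\<nu>'] \<and> \<nu>' (prog x) \<in> Fi x (\<nu> (prog x))
                  \<and> (\<forall>j. j \<noteq> prog x \<longrightarrow> \<nu>' j = \<nu> j)))}"

fun Sw :: "('a \<Rightarrow> 'i) \<Rightarrow> ('a \<Rightarrow> kind) \<Rightarrow> ('a \<Rightarrow> 'v \<Rightarrow> 'v set) \<Rightarrow>
    ('a \<Rightarrow> 'v \<Rightarrow> 'v \<Rightarrow> 'v set) \<Rightarrow> ('a \<Rightarrow> 'v \<Rightarrow> 'v set) \<Rightarrow> 'a list \<Rightarrow>
    (('i \<Rightarrow> 'v) list \<times> ('i \<Rightarrow> 'v) list) set" where
  "Sw prog kd Fc Fr Fi [] = Id"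
| "Sw prog kd Fc Fr Fi (x # w) = S1 prog kd Fc Fr Fi x O Sw prog kd Fc Fr Fi w"

definition top_tuple :: "('i \<Rightarrow> 'v list) \<Rightarrow> ('i \<Rightarrow> 'v)" where
  "top_tuple Ss = (\<lambda>j. last (Ss j))"

end

theory Submission
  imports Defs
begin

inductive Fz :: "'i list \<Rightarrow> ('i \<Rightarrow> 'v list) \<Rightarrow> ('i \<Rightarrow> 'v) list \<Rightarrow> bool" where
  Fz_base: "Fz [] P Q"
| Fz_push: "Fz st P Q \<Longrightarrow> Fz (k # st) (P(k := P k @ [\<nu> k])) (Q @ [\<nu>])"

definition Rel :: "'i list \<Rightarrow> ('i \<Rightarrow> 'v list) \<Rightarrow> ('i \<Rightarrow> 'v) list \<Rightarrow> bool" where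
  "Rel st Ss S \<longleftrightarrow> (\<exists>P Q \<nu>. Fz st P Q \<and> Ss = (\<lambda>j. P j @ [\<nu> j]) \<and> S = Q @ [\<nu>])"

definition nst :: "('a \<Rightarrow> 'i) \<Rightarrow> ('a \<Rightarrow> kind) \<Rightarrow> 'a \<Rightarrow> 'i list \<Rightarrow> 'i list" where
  "nst prog kd x st = (case kd x of KCall \<Rightarrow> prog x # st | KInt \<Rightarrow> st | KRet \<Rightarrow> tl st)"

lemma app2_eq: "(xs @ [a, b] = ys @ [c, d]) \<longleftrightarrow> xs = ys \<and> a = c \<and> b = d"
proof -
  have "xs @ [a, b] = (xs @ [a]) @ [b]" "ys @ [c, d] = (ys @ [c]) @ [d]" by simp_all
  then show ?thesis by auto
qed

lemma Rel_top: "Rel st Ss S \<Longrightarrow> top_tuple Ss = last S"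
  unfolding Rel_def top_tuple_def by auto

lemma Fz_ret: "Fz (k # st) P Q \<Longrightarrow> \<exists>P0 Q0 \<mu>. Fz st P0 Q0 \<and> P = P0(k := P0 k @ [\<mu> k]) \<and> Q = Q0 @ [\<mu>]"
  by (cases rule: Fz.cases) auto

lemma stepM:
  assumes R: "Rel st Ss S" and M: "(Ss, Ts) \<in> M1 prog kd Fc Fr Fi x"
    and ok: "kd x = KRet \<Longrightarrow> st \<noteq> [] \<and> hd st = prog x"
  shows "\<exists>T. (S, T) \<in> S1 prog kd Fc Fr Fi x \<and> Rel (nst prog kd x st) Ts T"
proof -
  obtain P Q \<nu> where F: "Fz st P Q" and Ss: "Ss = (\<lambda>j. P j @ [\<nu> j])" and S: "S = Q @ [\<nu>]"
    using R unfolding Rel_def by blast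
  define k where "k = prog x"
  have oth: "\<And>j. j \<noteq> k \<Longrightarrow> Ts j = Ss j" using M unfolding M1_def k_def by auto
  show ?thesis
  proof (cases "kd x")
    case KCall
    then obtain S' \<nu>0 \<nu>0' where a: "Ss k = S' @ [\<nu>0]" "Ts k = S' @ [\<nu>0, \<nu>0']" "\<nu>0' \<in> Fc x \<nu>0"
      using M unfolding M1_def k_def by auto
    have e: "S' = P k" "\<nu>0 = \<nu> k" using a(1) Ss by auto
    define \<nu>' where "\<nu>' = \<nu>(k := \<nu>0')"
    have "(S, Q @ [\<nu>, \<nu>']) \<in> S1 prog kd Fc Fr Fi x"
      unfolding S1_def using KCall S a e by (auto simp: \<nu>'_def k_def)
    moreover have "Rel (nst prog kd x st) Ts (Q @ [\<nu>, \<nu>'])"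
    proof -
      have "Fz (k # st) (P(k := P k @ [\<nu> k])) (Q @ [\<nu>])" by (rule Fz_push[OF F])
      moreover have "Ts = (\<lambda>j. (P(k := P k @ [\<nu> k])) j @ [\<nu>' j])"
        using oth a e Ss by (auto simp: \<nu>'_def)
      ultimately show ?thesis unfolding Rel_def nst_def using KCall k_def by force
    qed
    ultimately show ?thesis by blast
  next
    case KInt
    then obtain S' \<nu>0 \<nu>0' where a: "Ss k = S' @ [\<nu>0]" "Ts k = S' @ [\<nu>0']" "\<nu>0' \<in> Fi x \<nu>0"
      using M unfolding M1_def k_def by auto
    have e: "S' = P k" "\<nu>0 = \<nu> k" using a(1) Ss by auto
    define \<nu>' where "\<nu>' = \<nu>(k := \<nu>0')"
    have "(S, Q @ [\<nu>']) \<in> S1 prog kd Fc Fr Fi x"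
      unfolding S1_def using KInt S a e by (auto simp: \<nu>'_def k_def)
    moreover have "Rel (nst prog kd x st) Ts (Q @ [\<nu>'])"
    proof -
      have "Ts = (\<lambda>j. P j @ [\<nu>' j])"
        using oth a e Ss by (auto simp: \<nu>'_def)
      then show ?thesis unfolding Rel_def nst_def using KInt F by force
    qed
    ultimately show ?thesis by blast
  next
    case KRet
    have hs: "st \<noteq> [] \<and> hd st = k" using ok KRet unfolding k_def by blast
    then obtain st0 where st: "st = k # st0" by (metis list.collapse)
    obtain P0 Q0 \<mu> where F0: "Fz st0 P0 Q0" and P: "P = P0(k := P0 k @ [\<mu> k])" and Q: "Q = Q0 @ [\<mu>]"
      using Fz_ret[OF F[unfolded st]] by blast
    obtain S' \<nu>l \<nu>1 \<nu>1' where a: "Ss k = S' @ [\<nu>l, \<nu>1]" "Ts k = S' @ [\<nu>1']" "\<nu>1' \<in> Fr x \<nu>1 \<nu>l"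
      using M KRet unfolding M1_def k_def by auto
    have "Ss k = P0 k @ [\<mu> k, \<nu> k]" using Ss P by simp
    then have e: "S' = P0 k" "\<nu>l = \<mu> k" "\<nu>1 = \<nu> k" using a(1) by (auto simp: app2_eq)
    define \<nu>' where "\<nu>' = \<nu>(k := \<nu>1')"
    have "(S, Q0 @ [\<nu>']) \<in> S1 prog kd Fc Fr Fi x"
      unfolding S1_def using KRet S Q a e by (auto simp: \<nu>'_def k_def)
    moreover have "Rel (nst prog kd x st) Ts (Q0 @ [\<nu>'])"
    proof -
      have "Ts = (\<lambda>j. P0 j @ [\<nu>' j])"
        using oth a e Ss P by (auto simp: \<nu>'_def)
      then show ?thesis unfolding Rel_def nst_def using KRet F0 st by force
    qed
    ultimately show ?thesis by blast
  qed
qed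

lemma stepS:
  assumes R: "Rel st Ss S" and M: "(S, T) \<in> S1 prog kd Fc Fr Fi x"
    and ok: "kd x = KRet \<Longrightarrow> st \<noteq> [] \<and> hd st = prog x"
  shows "\<exists>Ts. (Ss, Ts) \<in> M1 prog kd Fc Fr Fi x \<and> Rel (nst prog kd x st) Ts T"
proof -
  obtain P Q \<nu> where F: "Fz st P Q" and Ss: "Ss = (\<lambda>j. P j @ [\<nu> j])" and S: "S = Q @ [\<nu>]"
    using R unfolding Rel_def by blast
  define k where "k = prog x"
  show ?thesis
  proof (cases "kd x")
    case KCall
    then obtain S0 \<nu>0 \<nu>' where a: "S = S0 @ [\<nu>0]" "T = S0 @ [\<nu>0, \<nu>']" "\<nu>' k \<in> Fc x (\<nu>0 k)"
      "\<And>j. j \<noteq> k \<Longrightarrow> \<nu>' j = \<nu>0 j"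
      using M unfolding S1_def k_def by auto
    have e: "S0 = Q" "\<nu>0 = \<nu>" using a(1) S by auto
    define Ts where "Ts = (\<lambda>j. (P(k := P k @ [\<nu> k])) j @ [\<nu>' j])"
    have "(Ss, Ts) \<in> M1 prog kd Fc Fr Fi x"
      unfolding M1_def using KCall Ss a e by (auto simp: Ts_def k_def)
    moreover have "Rel (nst prog kd x st) Ts T"
    proof -
      have "Fz (k # st) (P(k := P k @ [\<nu> k])) (Q @ [\<nu>])" by (rule Fz_push[OF F])
      then show ?thesis unfolding Rel_def nst_def Ts_def using KCall k_def a e by force
    qed
    ultimately show ?thesis by blast
  next
    case KInt
    then obtain S0 \<nu>0 \<nu>' where a: "S = S0 @ [\<nu>0]" "T = S0 @ [\<nu>']" "\<nu>' k \<in> Fi x (\<nu>0 k)"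
      "\<And>j. j \<noteq> k \<Longrightarrow> \<nu>' j = \<nu>0 j"
      using M unfolding S1_def k_def by auto
    have e: "S0 = Q" "\<nu>0 = \<nu>" using a(1) S by auto
    define Ts where "Ts = (\<lambda>j. P j @ [\<nu>' j])"
    have "(Ss, Ts) \<in> M1 prog kd Fc Fr Fi x"
      unfolding M1_def using KInt Ss a e by (auto simp: Ts_def k_def)
    moreover have "Rel (nst prog kd x st) Ts T"
      unfolding Rel_def nst_def Ts_def using KInt F a e by force
    ultimately show ?thesis by blast
  next
    case KRet
    have hs: "st \<noteq> [] \<and> hd st = k" using ok KRet unfolding k_def by blast
    then obtain st0 where st: "st = k # st0" by (metis list.collapse)
    obtain P0 Q0 \<mu> where F0: "Fz st0 P0 Q0" and P: "P = P0(k := P0 k @ [\<mu> k])" and Q: "Q = Q0 @ [\<mu>]"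
      using Fz_ret[OF F[unfolded st]] by blast
    obtain S0 \<nu>l \<nu>1 \<nu>' where a: "S = S0 @ [\<nu>l, \<nu>1]" "T = S0 @ [\<nu>']" "\<nu>' k \<in> Fr x (\<nu>1 k) (\<nu>l k)"
      "\<And>j. j \<noteq> k \<Longrightarrow> \<nu>' j = \<nu>1 j"
      using M KRet unfolding S1_def k_def by auto
    have "S = Q0 @ [\<mu>, \<nu>]" using S Q by simp
    then have e: "S0 = Q0" "\<nu>l = \<mu>" "\<nu>1 = \<nu>" using a(1) by (auto simp: app2_eq)
    define Ts where "Ts = (\<lambda>j. P0 j @ [\<nu>' j])"
    have "(Ss, Ts) \<in> M1 prog kd Fc Fr Fi x"
      unfolding M1_def using KRet Ss P a e by (auto simp: Ts_def k_def)
    moreover have "Rel (nst prog kd x st) Ts T"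
      unfolding Rel_def nst_def Ts_def using KRet F0 st a e by force
    ultimately show ?thesis by blast
  qed
qed

lemma wn_ok:
  assumes "wn_aux prog kd st (x # w)"
  shows "(kd x = KRet \<longrightarrow> st \<noteq> [] \<and> hd st = prog x) \<and> wn_aux prog kd (nst prog kd x st) w"
  using assms by (cases "kd x"; cases st) (auto simp: nst_def)

lemma main:
  "wn_aux prog kd st w \<Longrightarrow> Rel st Ss S \<Longrightarrow>
   {top_tuple Ts | Ts. (Ss, Ts) \<in> Mw prog kd Fc Fr Fi w}
       = {last T | T. (S, T) \<in> Sw prog kd Fc Fr Fi w}"
proof (induction w arbitrary: st Ss S)
  case Nil
  then show ?case using Rel_top by auto
next
  case (Cons x w)
  note ok = wn_ok[OF Cons.prems(1)]
  show ?case
  proof (intro equalityI subsetI)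
    fix t assume "t \<in> {top_tuple Ts | Ts. (Ss, Ts) \<in> Mw prog kd Fc Fr Fi (x # w)}"
    then obtain Ts0 Ts where t: "t = top_tuple Ts" and m1: "(Ss, Ts0) \<in> M1 prog kd Fc Fr Fi x"
      and mw: "(Ts0, Ts) \<in> Mw prog kd Fc Fr Fi w" by auto
    obtain T0 where s1: "(S, T0) \<in> S1 prog kd Fc Fr Fi x" and R: "Rel (nst prog kd x st) Ts0 T0"
      using stepM[OF Cons.prems(2) m1] ok by blast
    have "t \<in> {last T | T. (T0, T) \<in> Sw prog kd Fc Fr Fi w}"
      using Cons.IH[OF conjunct2[OF ok] R] t mw by blast
    then show "t \<in> {last T | T. (S, T) \<in> Sw prog kd Fc Fr Fi (x # w)}" using s1 by auto
  next
    fix t assume "t \<in> {last T | T. (S, T) \<in> Sw prog kd Fc Fr Fi (x # w)}"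
    then obtain T0 T where t: "t = last T" and m1: "(S, T0) \<in> S1 prog kd Fc Fr Fi x"
      and mw: "(T0, T) \<in> Sw prog kd Fc Fr Fi w" by auto
    obtain Ts0 where s1: "(Ss, Ts0) \<in> M1 prog kd Fc Fr Fi x" and R: "Rel (nst prog kd x st) Ts0 T0"
      using stepS[OF Cons.prems(2) m1] ok by blast
    have "t \<in> {top_tuple Ts | Ts. (Ts0, Ts) \<in> Mw prog kd Fc Fr Fi w}"
      using Cons.IH[OF conjunct2[OF ok] R] t mw by blast
    then show "t \<in> {top_tuple Ts | Ts. (Ss, Ts) \<in> Mw prog kd Fc Fr Fi (x # w)}" using s1 by auto
  qed
qed

theorem lemmaC2:
  fixes prog :: "'a \<Rightarrow> 'i::finite" and kd :: "'a \<Rightarrow> kind"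
    and Fc :: "'a \<Rightarrow> 'v \<Rightarrow> 'v set" and Fr :: "'a \<Rightarrow> 'v \<Rightarrow> 'v \<Rightarrow> 'v set"
    and Fi :: "'a \<Rightarrow> 'v \<Rightarrow> 'v set"
    and \<rho> :: "'a list" and Ss :: "'i \<Rightarrow> 'v list" and S :: "('i \<Rightarrow> 'v) list"
  assumes "well_nested_npr prog kd \<rho>"
    and "\<forall>j. Ss j \<noteq> []" and "S \<noteq> []"
    and "top_tuple Ss = last S"
  shows "{top_tuple Ts | Ts. (Ss, Ts) \<in> Mw prog kd Fc Fr Fi \<rho>}
       = {last T | T. (S, T) \<in> Sw prog kd Fc Fr Fi \<rho>}"
proof -
  have "Rel [] Ss S"
    unfolding Rel_def
  proof (intro exI conjI)
    show "Fz [] (\<lambda>j. butlast (Ss j)) (butlast S)" by (rule Fz_base)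
    show "Ss = (\<lambda>j. butlast (Ss j) @ [last S j])"
    proof
      fix j
      have "last (Ss j) = last S j" using assms(4) unfolding top_tuple_def by metis
      then show "Ss j = butlast (Ss j) @ [last S j]" using assms(2) by (metis append_butlast_last_id)
    qed
    show "S = butlast S @ [last S]" using assms(3) by simp
  qed
  then show ?thesis using main assms(1) unfolding well_nested_npr_def by blast
qed

end
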